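(* Let $n\ge2$ and $\delta>0$. For $i\in\{1,2\}$ and $j\in\{1,\dots,n\}$ let $z_j^{(i)}\in\mathbb{R}$ be the standardized samples defined in the context, let $\tilde z_j^{(i)}\in\delta\mathbb{Z}$ be a nearest integer multiple of $\delta$ to $z_j^{(i)}$ (so $|z_j^{(i)}-\tilde z_j^{(i)}|\le\delta/2$), and let $r=\frac{1}{n-1}\sum_{j=1}^n z_j^{(1)}z_j^{(2)}$ and $\tilde r=\frac{1}{n-1}\sum_{j=1}^n\tilde z_j^{(1)}\tilde z_j^{(2)}$. If $R\in\mathbb{R}$ satisfies $|\tilde z_j^{(i)}|\le R$ for all $i\in\{1,2\}$ and $j\in\{1,\dots,n\}$, then $$|r-\tilde r|\le\frac{n\delta}{n-1}\left(R+\frac{\delta}{4}\right).$$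
   Context: For $i=1,2$, $x_1^{(i)},\dots,x_n^{(i)}$ are real samples (not all equal), $\bar x^{(i)}$ is their mean, $s^{(i)}=\sqrt{\frac{1}{n-1}\sum_{j=1}^n(x_j^{(i)}-\bar x^{(i)})^2}$, and $z_j^{(i)}=(x_j^{(i)}-\bar x^{(i)})/s^{(i)}$; thus $r$ is the sample Pearson correlation of the two sample sequences. (In the paper, $\tilde z_j^{(i)}$ is the nearest element of the fixed-point set $\{x\delta: x\in\mathbb{Z}, |x|\le M\}$ for some $M\in\mathbb{N}$; the bound does not depend on $M$.) *)

theory Defs
  imports "HOL-Analysis.Analysis"
begin

definition smean :: "nat \<Rightarrow> (nat \<Rightarrow> real) \<Rightarrow> real" where
  "smean n x = (\<Sum>j=1..n. x j) / real n"

definition ssd :: "nat \<Rightarrow> (nat \<Rightarrow> real) \<Rightarrow> real" where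
  "ssd n x = sqrt ((\<Sum>j=1..n. (x j - smean n x)^2) / (real n - 1))"

definition zstd :: "nat \<Rightarrow> (nat \<Rightarrow> real) \<Rightarrow> nat \<Rightarrow> real" where
  "zstd n x j = (x j - smean n x) / ssd n x"

definition nearest_mult :: "real \<Rightarrow> real \<Rightarrow> real \<Rightarrow> bool" where
  "nearest_mult \<delta> z zt \<longleftrightarrow> (\<exists>k::int. zt = \<delta> * of_int k) \<and>
     (\<forall>m::int. \<bar>z - zt\<bar> \<le> \<bar>z - \<delta> * of_int m\<bar>)"

end

theory Submission
  imports Defs
begin

lemma near_err:
  assumes d: "(\<delta>::real) > 0" and nm: "nearest_mult \<delta> z zt"
  shows "\<bar>z - zt\<bar> \<le> \<delta> / 2"
proof -
  define m where "m = floor (z/\<delta> + 1/2)"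
  have m1: "real_of_int m \<le> z/\<delta> + 1/2" and m2: "z/\<delta> + 1/2 < real_of_int m + 1"
    unfolding m_def by linarith+
  have "\<bar>z/\<delta> - real_of_int m\<bar> \<le> 1/2" using m1 m2 by linarith
  hence "\<delta> * \<bar>z/\<delta> - real_of_int m\<bar> \<le> \<delta> * (1/2)" using d by (intro mult_left_mono) auto
  moreover have "\<delta> * \<bar>z/\<delta> - real_of_int m\<bar> = \<bar>z - \<delta> * real_of_int m\<bar>"
    proof -
    have "\<delta> * (z/\<delta> - real_of_int m) = z - \<delta> * real_of_int m" using d by (simp add: right_diff_distrib)
    thus ?thesis using d by (metis abs_mult abs_of_pos)
  qed
  ultimately have "\<bar>z - \<delta> * real_of_int m\<bar> \<le> \<delta>/2" by simp
  moreover have "\<bar>z - zt\<bar> \<le> \<bar>z - \<delta> * real_of_int m\<bar>" using nm unfolding nearest_mult_def by blast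
  ultimately show ?thesis by linarith
qed

lemma prod_err:
  fixes a b a1 b1 e R :: real
  assumes "\<bar>a - a1\<bar> \<le> e" "\<bar>b - b1\<bar> \<le> e" "\<bar>a1\<bar> \<le> R" "\<bar>b1\<bar> \<le> R"
  shows "\<bar>a*b - a1*b1\<bar> \<le> 2*e*R + e*e"
proof -
  define u where "u = a - a1"
  define v where "v = b - b1"
  have eq: "a*b - a1*b1 = (a1 * v) + (u * b1) + (u * v)" unfolding u_def v_def by algebra
  have e0: "0 \<le> e" using assms(1) by linarith
  have "\<bar>a1* v\<bar> \<le> R*e" unfolding abs_mult using assms e0 unfolding v_def
    by (intro mult_mono) auto
  moreover have "\<bar>u*b1\<bar> \<le> e*R" unfolding abs_mult using assms e0 unfolding u_def
    by (intro mult_mono) auto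
  moreover have "\<bar>u* v\<bar> \<le> e*e" unfolding abs_mult using assms e0 unfolding u_def v_def
    by (intro mult_mono) auto
  ultimately show ?thesis unfolding eq by (simp add: algebra_simps)
qed

theorem lemma2:
  fixes n :: nat and \<delta> R :: real
    and x :: "nat \<Rightarrow> nat \<Rightarrow> real" and zt :: "nat \<Rightarrow> nat \<Rightarrow> real"
  assumes "n \<ge> 2" and "\<delta> > 0"
    and not_const: "\<And>i. i \<in> {1,2} \<Longrightarrow> \<exists>j\<in>{1..n}. \<exists>k\<in>{1..n}. x i j \<noteq> x i k"
    and near: "\<And>i j. i \<in> {1,2} \<Longrightarrow> j \<in> {1..n} \<Longrightarrow> nearest_mult \<delta> (zstd n (x i) j) (zt i j)"
    and bound: "\<And>i j. i \<in> {1,2} \<Longrightarrow> j \<in> {1..n} \<Longrightarrow> \<bar>zt i j\<bar> \<le> R"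
  shows "\<bar>(\<Sum>j=1..n. zstd n (x 1) j * zstd n (x 2) j) / (real n - 1)
          - (\<Sum>j=1..n. zt 1 j * zt 2 j) / (real n - 1)\<bar>
         \<le> real n * \<delta> / (real n - 1) * (R + \<delta> / 4)"
proof -
  have pos: "real n - 1 > 0" using assms(1) by simp
  have tm: "\<bar>zstd n (x 1) j * zstd n (x 2) j - zt 1 j * zt 2 j\<bar> \<le> \<delta> * (R + \<delta>/4)"
    if j: "j \<in> {1..n}" for j
  proof -
    have "\<bar>zstd n (x 1) j * zstd n (x 2) j - zt 1 j * zt 2 j\<bar> \<le> 2*(\<delta>/2)*R + (\<delta>/2)*(\<delta>/2)"
      using near_err[OF assms(2) near[of 1 j]] near_err[OF assms(2) near[of 2 j]]
        bound[of 1 j] bound[of 2 j] j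
      by (intro prod_err) auto
    thus ?thesis by (simp add: algebra_simps power2_eq_square)
  qed
  have "\<bar>(\<Sum>j=1..n. zstd n (x 1) j * zstd n (x 2) j) - (\<Sum>j=1..n. zt 1 j * zt 2 j)\<bar>
      = \<bar>\<Sum>j=1..n. zstd n (x 1) j * zstd n (x 2) j - zt 1 j * zt 2 j\<bar>"
    by (simp add: sum_subtractf)
  also have "\<dots> \<le> (\<Sum>j=1..n. \<bar>zstd n (x 1) j * zstd n (x 2) j - zt 1 j * zt 2 j\<bar>)"
    by (rule sum_abs)
  also have "\<dots> \<le> (\<Sum>j=1..n. \<delta> * (R + \<delta>/4))" by (rule sum_mono) (rule tm)
  also have "\<dots> = real n * (\<delta> * (R + \<delta>/4))" by simp
  finally have S: "\<bar>(\<Sum>j=1..n. zstd n (x 1) j * zstd n (x 2) j) - (\<Sum>j=1..n. zt 1 j * zt 2 j)\<bar>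
      \<le> real n * (\<delta> * (R + \<delta>/4))" .
  have "\<bar>(\<Sum>j=1..n. zstd n (x 1) j * zstd n (x 2) j) / (real n - 1)
          - (\<Sum>j=1..n. zt 1 j * zt 2 j) / (real n - 1)\<bar>
      = \<bar>(\<Sum>j=1..n. zstd n (x 1) j * zstd n (x 2) j) - (\<Sum>j=1..n. zt 1 j * zt 2 j)\<bar> / (real n - 1)"
    using pos by (simp add: diff_divide_distrib[symmetric])
  also have "\<dots> \<le> real n * (\<delta> * (R + \<delta>/4)) / (real n - 1)"
    using S pos by (intro divide_right_mono) auto
  finally show ?thesis by simp
qed

end
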